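(* Let $Q\ge 3$ and let $m$ be an integer with $$m\ge Q-1+\frac{(Q+2)^2}{4}\ \text{ if $Q$ is even},\qquad m\ge Q-1+\frac{(Q+1)(Q+3)}{4}\ \text{ if $Q$ is odd}.$$ Then in the binary random graph mixture model with $Q$ groups, the parameters $(\pi_q)_{1\le q\le Q}$ and $(p_{ql})_{1\le q\le l\le Q}$ are generically identifiable, up to label swapping, from the joint distribution of $K_{m^2}$. Moreover the same conclusion holds when the group proportions are fixed: for any fixed $\boldsymbol\pi$ in the open simplex, for generic connectivity parameters $(p_{ql})_{1\le q\le l\le Q}$ in $(0,1)^{Q(Q+1)/2}$, the connectivities are identifiable up to label swapping from the distribution of $K_{m^2}$.
   Context: Random graph mixture model: fix $n$ nodes. $Z_1,\dots,Z_n$ are i.i.d. with values in $\{1,\dots,Q\}$, $\pi_q=\mathbb P(Z_i=q)\in(0,1)$, $\sum_q\pi_q=1$. Edge variables $X_{ij}$, $1\le i<j\le n$, are conditionally independent given $(Z_1,\dots,Z_n)$, and the conditional law of $X_{ij}$ depends only on $(Z_i,Z_j)$ through a symmetric family of laws (the law for groups $(q,l)$ equals that for $(l,q)$). In the binary model, $X_{ij}\in\{0,1\}$ and $\mathbb P(X_{ij}=1\mid Z_i=q,Z_j=l)=p_{ql}=p_{lq}$. $K_n$ denotes the collection of all $\binom n2$ edge variables among $n$ nodes (its law does not depend on which $n$ nodes are chosen). "Identifiable up to label swapping from the distribution of $K_n$" means: two parameter values inducing the same joint law of $K_n$ differ only by a permutation $\sigma$ of $\{1,\dots,Q\}$ applied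 simultaneously to all group-indexed parameters ($\pi_q\mapsto\pi_{\sigma(q)}$, $p_{ql}\mapsto p_{\sigma(q)\sigma(l)}$). "Generically identifiable" means identifiability holds for all parameter values outside a proper algebraic subvariety (the zero set of some not-identically-zero polynomials) of the parameter space, hence outside a Lebesgue-null set; here the parameter space is the open simplex of $\boldsymbol\pi$ times $(0,1)^{Q(Q+1)/2}$. *)

theory Defs
  imports Complex_Main "HOL-Library.FuncSet" "HOL-Combinatorics.Permutations"
begin

text \<open>Groups are labelled 0..<Q, nodes 0..<n. Group proportions w :: nat => real,
 connectivities p :: nat => nat => real (only entries with indices < Q matter).\<close>

definition open_simplex :: "nat \<Rightarrow> (nat \<Rightarrow> real) \<Rightarrow> bool" where
  "open_simplex Q w \<longleftrightarrow> (\<forall>q<Q. 0 < w q) \<and> (\<Sum>q<Q. w q) = 1"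

definition conn_space :: "nat \<Rightarrow> (nat \<Rightarrow> nat \<Rightarrow> real) \<Rightarrow> bool" where
  "conn_space Q p \<longleftrightarrow> (\<forall>q<Q. \<forall>l<Q. 0 < p q l \<and> p q l < 1 \<and> p q l = p l q)"

definition param_space :: "nat \<Rightarrow> (nat \<Rightarrow> real) \<Rightarrow> (nat \<Rightarrow> nat \<Rightarrow> real) \<Rightarrow> bool" where
  "param_space Q w p \<longleftrightarrow> open_simplex Q w \<and> conn_space Q p"

definition law_K :: "nat \<Rightarrow> nat \<Rightarrow> (nat \<Rightarrow> real) \<Rightarrow> (nat \<Rightarrow> nat \<Rightarrow> real)
    \<Rightarrow> (nat \<Rightarrow> nat \<Rightarrow> bool) \<Rightarrow> real" where
  "law_K n Q w p x =
     (\<Sum>z \<in> {..<n} \<rightarrow>\<^sub>E {..<Q}.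
        (\<Prod>i<n. w (z i)) *
        (\<Prod>(i,j) \<in> {(i,j). i < j \<and> j < n}.
            if x i j then p (z i) (z j) else 1 - p (z i) (z j)))"

definition param_poly :: "nat \<Rightarrow> ((nat \<Rightarrow> real) \<Rightarrow> (nat \<Rightarrow> nat \<Rightarrow> real) \<Rightarrow> real) \<Rightarrow> bool" where
  "param_poly Q F \<longleftrightarrow> (\<exists>M :: ((nat \<Rightarrow> nat) \<times> (nat \<Rightarrow> nat \<Rightarrow> nat)) set. \<exists>c. finite M \<and>
     (\<forall>w p. F w p = (\<Sum>(a,b)\<in>M. c (a,b) * (\<Prod>q<Q. w q ^ a q) *
                                      (\<Prod>q<Q. \<Prod>l<Q. p q l ^ b q l))))"

definition conn_poly :: "nat \<Rightarrow> ((nat \<Rightarrow> nat \<Rightarrow> real) \<Rightarrow> real) \<Rightarrow> bool" where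
  "conn_poly Q G \<longleftrightarrow> (\<exists>M :: (nat \<Rightarrow> nat \<Rightarrow> nat) set. \<exists>c. finite M \<and>
     (\<forall>p. G p = (\<Sum>b\<in>M. c b * (\<Prod>q<Q. \<Prod>l<Q. p q l ^ b q l))))"

end

theory Submission
  imports Defs "HOL-Computational_Algebra.Polynomial" "HOL-Library.Function_Algebras"
begin


definition mono_pp :: "nat \<Rightarrow> (nat \<Rightarrow> nat) \<Rightarrow> (nat \<Rightarrow> nat \<Rightarrow> nat) \<Rightarrow> (nat \<Rightarrow> real) \<Rightarrow> (nat \<Rightarrow> nat \<Rightarrow> real) \<Rightarrow> real" where
  "mono_pp Q a b w p = (\<Prod>q<Q. w q ^ a q) * (\<Prod>q<Q. \<Prod>l<Q. p q l ^ b q l)"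

lemma param_poly_alt: "param_poly Q F \<longleftrightarrow> (\<exists>M c. finite M \<and> (\<forall>w p. F w p = (\<Sum>m\<in>M. c m * mono_pp Q (fst m) (snd m) w p)))"
  unfolding param_poly_def mono_pp_def by (simp add: split_def mult.assoc)

lemma mono_pp_add: "mono_pp Q (a1 + a2) (b1 + b2) w p = mono_pp Q a1 b1 w p * mono_pp Q a2 b2 w p"
  unfolding mono_pp_def by (simp add: power_add prod.distrib mult_ac)

lemma param_poly_const: "param_poly Q (\<lambda>w p. c)"
  unfolding param_poly_alt
  by (rule exI[of _ "{(\<lambda>_. 0, \<lambda>_ _. 0)}"], rule exI[of _ "\<lambda>_. c"]) (simp add: mono_pp_def)

lemma param_poly_w: "q < Q \<Longrightarrow> param_poly Q (\<lambda>w p. w q)"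
  unfolding param_poly_alt
  apply (rule exI[of _ "{(\<lambda>i. if i = q then 1 else 0, \<lambda>_ _. 0)}"], rule exI[of _ "\<lambda>_. 1"])
  apply (simp add: mono_pp_def)
  apply (subst prod.mono_neutral_right[of "{..<Q}" "{q}"]; auto)
  done

lemma param_poly_p: "q < Q \<Longrightarrow> l < Q \<Longrightarrow> param_poly Q (\<lambda>w p. p q l)"
proof -
  assume a: "q < Q" "l < Q"
  have "(\<Prod>i<Q. \<Prod>j<Q. p i j ^ (if i = q \<and> j = l then 1 else 0)) = p q l" for p :: "nat \<Rightarrow> nat \<Rightarrow> real"
  proof -
    have "(\<Prod>i<Q. \<Prod>j<Q. p i j ^ (if i = q \<and> j = l then 1 else 0)) = (\<Prod>i<Q. if i = q then p q l else 1)"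
    proof (rule prod.cong[OF refl])
      fix i assume "i \<in> {..<Q}"
      show "(\<Prod>j<Q. p i j ^ (if i = q \<and> j = l then 1 else 0)) = (if i = q then p q l else 1)"
        using a by (cases "i = q") (auto simp: prod.delta' if_distrib cong: if_cong)
    qed
    also have "\<dots> = p q l" using a by (simp add: prod.delta')
    finally show ?thesis .
  qed
  then show ?thesis unfolding param_poly_alt
    by (intro exI[of _ "{(\<lambda>_. 0, \<lambda>i j. if i = q \<and> j = l then 1 else 0)}"] exI[of _ "\<lambda>_. 1"])
       (simp add: mono_pp_def)
qed

lemma param_poly_add: "param_poly Q F \<Longrightarrow> param_poly Q G \<Longrightarrow> param_poly Q (\<lambda>w p. F w p + G w p)"
proof -
  assume hF: "param_poly Q F" and hG: "param_poly Q G"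
  obtain M1 c1 where M1: "finite M1"
    and F: "\<And>w p. F w p = (\<Sum>m\<in>M1. c1 m * mono_pp Q (fst m) (snd m) w p)"
    using hF unfolding param_poly_alt by blast
  obtain M2 c2 where M2: "finite M2"
    and G: "\<And>w p. G w p = (\<Sum>m\<in>M2. c2 m * mono_pp Q (fst m) (snd m) w p)"
    using hG unfolding param_poly_alt by blast
  note M = M1 M2
  define c where "c m = (if m \<in> M1 then c1 m else 0) + (if m \<in> M2 then c2 m else 0)" for m
  have "F w p + G w p = (\<Sum>m\<in>M1 \<union> M2. c m * mono_pp Q (fst m) (snd m) w p)" for w p
  proof -
    have "(\<Sum>m\<in>M1 \<union> M2. c m * mono_pp Q (fst m) (snd m) w p) =
       (\<Sum>m\<in>M1 \<union> M2. (if m \<in> M1 then c1 m * mono_pp Q (fst m) (snd m) w p else 0))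
      + (\<Sum>m\<in>M1 \<union> M2. (if m \<in> M2 then c2 m * mono_pp Q (fst m) (snd m) w p else 0))"
      unfolding sum.distrib[symmetric] by (rule sum.cong) (auto simp: c_def distrib_right)
    also have "\<dots> = F w p + G w p"
      unfolding F G using M
      by (intro arg_cong2[where f="(+)"] sum.mono_neutral_cong_right) auto
    finally show ?thesis by simp
  qed
  then show ?thesis unfolding param_poly_alt using M by blast
qed


lemma param_poly_mult: "param_poly Q F \<Longrightarrow> param_poly Q G \<Longrightarrow> param_poly Q (\<lambda>w p. F w p * G w p)"
proof -
  assume hF: "param_poly Q F" and hG: "param_poly Q G"
  obtain M1 c1 where M1: "finite M1"
    and F: "\<And>w p. F w p = (\<Sum>m\<in>M1. c1 m * mono_pp Q (fst m) (snd m) w p)"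
    using hF unfolding param_poly_alt by blast
  obtain M2 c2 where M2: "finite M2"
    and G: "\<And>w p. G w p = (\<Sum>m\<in>M2. c2 m * mono_pp Q (fst m) (snd m) w p)"
    using hG unfolding param_poly_alt by blast
  note M = M1 M2
  define h where "h = (\<lambda>(m1::(nat \<Rightarrow> nat) \<times> (nat \<Rightarrow> nat \<Rightarrow> nat), m2::(nat \<Rightarrow> nat) \<times> (nat \<Rightarrow> nat \<Rightarrow> nat)). (fst m1 + fst m2, snd m1 + snd m2))"
  define c where "c m = (\<Sum>x\<in>{x\<in>M1 \<times> M2. h x = m}. c1 (fst x) * c2 (snd x))" for m
  have "F w p * G w p = (\<Sum>m\<in>h ` (M1 \<times> M2). c m * mono_pp Q (fst m) (snd m) w p)" for w p
  proof -
    have "F w p * G w p = (\<Sum>x\<in>M1 \<times> M2. c1 (fst x) * c2 (snd x) * mono_pp Q (fst (h x)) (snd (h x)) w p)"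
      unfolding F G sum_product sum.cartesian_product h_def
      by (rule sum.cong) (auto simp: mono_pp_add split_def mult_ac)
    also have "\<dots> = (\<Sum>m\<in>h ` (M1 \<times> M2). \<Sum>x\<in>{x\<in>M1 \<times> M2. h x = m}. c1 (fst x) * c2 (snd x) * mono_pp Q (fst (h x)) (snd (h x)) w p)"
      using M by (rule_tac sum.image_gen) auto
    also have "\<dots> = (\<Sum>m\<in>h ` (M1 \<times> M2). c m * mono_pp Q (fst m) (snd m) w p)"
      unfolding c_def sum_distrib_right by (rule sum.cong, simp, rule sum.cong) auto
    finally show ?thesis .
  qed
  then show ?thesis unfolding param_poly_alt using M by (intro exI[of _ "h ` (M1 \<times> M2)"] exI[of _ c]) auto
qed

lemma param_poly_sum: "finite A \<Longrightarrow> (\<And>i. i \<in> A \<Longrightarrow> param_poly Q (f i)) \<Longrightarrow> param_poly Q (\<lambda>w p. \<Sum>i\<in>A. f i w p)"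
  by (induction A rule: finite_induct) (auto intro: param_poly_add param_poly_const)

lemma param_poly_prod: "finite A \<Longrightarrow> (\<And>i. i \<in> A \<Longrightarrow> param_poly Q (f i)) \<Longrightarrow> param_poly Q (\<lambda>w p. \<Prod>i\<in>A. f i w p)"
  by (induction A rule: finite_induct) (auto intro: param_poly_mult param_poly_const)

lemma param_poly_diff: "param_poly Q F \<Longrightarrow> param_poly Q G \<Longrightarrow> param_poly Q (\<lambda>w p. F w p - G w p)"
  using param_poly_add[of Q F "\<lambda>w p. (-1) * G w p"] param_poly_mult[OF param_poly_const[of Q "-1"], of G]
  by simp

lemma param_poly_conn: "param_poly Q F \<Longrightarrow> conn_poly Q (F w)"
proof -
  assume hF: "param_poly Q F"
  obtain M c where M: "finite M"
    and F: "\<And>w p. F w p = (\<Sum>m\<in>M. c m * mono_pp Q (fst m) (snd m) w p)"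
    using hF unfolding param_poly_alt by blast
  define d where "d b = (\<Sum>m\<in>{m\<in>M. snd m = b}. c m * (\<Prod>q<Q. w q ^ fst m q))" for b
  have "F w p = (\<Sum>b\<in>snd ` M. d b * (\<Prod>q<Q. \<Prod>l<Q. p q l ^ b q l))" for p
  proof -
    have "F w p = (\<Sum>b\<in>snd ` M. \<Sum>m\<in>{m\<in>M. snd m = b}. c m * mono_pp Q (fst m) (snd m) w p)"
      unfolding F using M by (rule sum.image_gen)
    also have "\<dots> = (\<Sum>b\<in>snd ` M. d b * (\<Prod>q<Q. \<Prod>l<Q. p q l ^ b q l))"
      unfolding d_def sum_distrib_right mono_pp_def by (rule sum.cong, simp, rule sum.cong) (auto simp: mult_ac)
    finally show ?thesis .
  qed
  then show ?thesis unfolding conn_poly_def using M by (intro exI[of _ "snd ` M"] exI[of _ d]) auto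
qed



definition pairs :: "nat \<Rightarrow> (nat \<times> nat) set" where
  "pairs n = {(i,j). i < j \<and> j < n}"

lemma finite_pairs: "finite (pairs n)"
  by (rule finite_subset[of _ "{..<n} \<times> {..<n}"]) (auto simp: pairs_def)

lemma law_moment:
  assumes E: "E \<subseteq> pairs n"
  shows "(\<Sum>y\<in>pairs n \<rightarrow>\<^sub>E (UNIV::bool set). law_K n Q w p (\<lambda>i j. y (i,j)) * (\<Prod>e\<in>E. if y e then 1 else 0))
       = (\<Sum>z\<in>{..<n} \<rightarrow>\<^sub>E {..<Q}. (\<Prod>i<n. w (z i)) * (\<Prod>e\<in>E. p (z (fst e)) (z (snd e))))"
proof -
  define h where "h z e b = (if b then p (z (fst e)) (z (snd e)) else 1 - p (z (fst e)) (z (snd e)))"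
    for z :: "nat \<Rightarrow> nat" and e :: "nat \<times> nat" and b :: bool
  have fin: "finite (pairs n)" by (rule finite_pairs)
  have PE: "pairs n \<inter> E = E" using E by blast
  have hh: "(\<lambda>(i,j). if y (i,j) then p (z i) (z j) else 1 - p (z i) (z j)) = (\<lambda>e. h z e (y e))" for y z
    by (rule ext) (simp add: h_def split_def)
  have lawK: "law_K n Q w p (\<lambda>i j. y (i,j)) = (\<Sum>z\<in>{..<n} \<rightarrow>\<^sub>E {..<Q}. (\<Prod>i<n. w (z i)) * (\<Prod>e\<in>pairs n. h z e (y e)))" for y
    unfolding law_K_def pairs_def hh ..
  have inner: "(\<Sum>y\<in>pairs n \<rightarrow>\<^sub>E (UNIV::bool set). (\<Prod>e\<in>pairs n. h z e (y e)) * (\<Prod>e\<in>E. if y e then 1 else 0))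
      = (\<Prod>e\<in>E. p (z (fst e)) (z (snd e)))" for z
  proof -
    have "(\<Sum>y\<in>pairs n \<rightarrow>\<^sub>E (UNIV::bool set). (\<Prod>e\<in>pairs n. h z e (y e)) * (\<Prod>e\<in>E. if y e then 1 else 0))
      = (\<Sum>y\<in>pairs n \<rightarrow>\<^sub>E (UNIV::bool set). \<Prod>e\<in>pairs n. h z e (y e) * (if e \<in> E then (if y e then 1 else 0) else 1))"
    proof (rule sum.cong[OF refl])
      fix y
      have "(\<Prod>e\<in>E. if y e then 1 else 0) = (\<Prod>e\<in>pairs n. if e \<in> E then (if y e then 1 else 0) else (1::real))"
        using prod.inter_restrict[OF fin, of "\<lambda>e. if y e then 1 else (0::real)" E] PE by simp
      then show "(\<Prod>e\<in>pairs n. h z e (y e)) * (\<Prod>e\<in>E. if y e then 1 else 0)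
         = (\<Prod>e\<in>pairs n. h z e (y e) * (if e \<in> E then (if y e then 1 else 0) else 1))"
        by (simp add: prod.distrib)
    qed
    also have "\<dots> = (\<Prod>e\<in>pairs n. \<Sum>b\<in>(UNIV::bool set). h z e b * (if e \<in> E then (if b then 1 else 0) else 1))"
      by (rule prod_sum_PiE[symmetric]) (use fin in auto)
    also have "\<dots> = (\<Prod>e\<in>pairs n. if e \<in> E then p (z (fst e)) (z (snd e)) else 1)"
      by (rule prod.cong[OF refl]) (simp add: UNIV_bool h_def)
    also have "\<dots> = (\<Prod>e\<in>E. p (z (fst e)) (z (snd e)))"
      using prod.inter_restrict[OF fin, of "\<lambda>e. p (z (fst e)) (z (snd e))" E] PE by simp
    finally show ?thesis .
  qed
  have "(\<Sum>y\<in>pairs n \<rightarrow>\<^sub>E (UNIV::bool set). law_K n Q w p (\<lambda>i j. y (i,j)) * (\<Prod>e\<in>E. if y e then 1 else 0))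
     = (\<Sum>y\<in>pairs n \<rightarrow>\<^sub>E (UNIV::bool set). \<Sum>z\<in>{..<n} \<rightarrow>\<^sub>E {..<Q}. (\<Prod>i<n. w (z i)) * ((\<Prod>e\<in>pairs n. h z e (y e)) * (\<Prod>e\<in>E. if y e then 1 else 0)))"
    unfolding lawK sum_distrib_right by (simp add: mult.assoc)
  also have "\<dots> = (\<Sum>z\<in>{..<n} \<rightarrow>\<^sub>E {..<Q}. (\<Prod>i<n. w (z i)) * (\<Sum>y\<in>pairs n \<rightarrow>\<^sub>E (UNIV::bool set). (\<Prod>e\<in>pairs n. h z e (y e)) * (\<Prod>e\<in>E. if y e then 1 else 0)))"
    by (subst sum.swap) (simp add: sum_distrib_left)
  also have "\<dots> = (\<Sum>z\<in>{..<n} \<rightarrow>\<^sub>E {..<Q}. (\<Prod>i<n. w (z i)) * (\<Prod>e\<in>E. p (z (fst e)) (z (snd e))))"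
    by (simp add: inner)
  finally show ?thesis .
qed

lemma law_moment_eq:
  assumes "E \<subseteq> pairs n" "law_K n Q w p = law_K n Q w' p'"
  shows "(\<Sum>z\<in>{..<n} \<rightarrow>\<^sub>E {..<Q}. (\<Prod>i<n. w (z i)) * (\<Prod>e\<in>E. p (z (fst e)) (z (snd e))))
       = (\<Sum>z\<in>{..<n} \<rightarrow>\<^sub>E {..<Q}. (\<Prod>i<n. w' (z i)) * (\<Prod>e\<in>E. p' (z (fst e)) (z (snd e))))"
  using law_moment[OF assms(1), of Q w p] law_moment[OF assms(1), of Q w' p'] assms(2) by simp



definition theta :: "nat \<Rightarrow> (nat \<Rightarrow> real) \<Rightarrow> (nat \<Rightarrow> nat \<Rightarrow> real) \<Rightarrow> nat \<Rightarrow> real" where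
  "theta Q w p q = (\<Sum>l<Q. w l * p q l)"

definition Eset :: "bool \<Rightarrow> nat set \<Rightarrow> nat set \<Rightarrow> (nat \<times> nat) set" where
  "Eset flag S T = (if flag then {(0,1)} else {}) \<union> (\<lambda>j. (0,j)) ` S \<union> (\<lambda>j. (1,j)) ` T"

lemma Eset_sub: "S \<subseteq> {2..<n} \<Longrightarrow> T \<subseteq> {2..<n} \<Longrightarrow> 2 \<le> n \<Longrightarrow> Eset flag S T \<subseteq> pairs n"
  unfolding Eset_def pairs_def by auto

lemma prod_Eset:
  fixes g :: "nat \<times> nat \<Rightarrow> real"
  assumes "S \<subseteq> {2..<n}" "T \<subseteq> {2..<n}"
  shows "(\<Prod>e\<in>Eset flag S T. g e) = (if flag then g (0,1) else 1) * (\<Prod>j\<in>S. g (0,j)) * (\<Prod>j\<in>T. g (1,j))"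
proof -
  have fS: "finite S" "finite T" using finite_subset[OF assms(1)] finite_subset[OF assms(2)] by auto
  have d1: "((if flag then {(0,1)} else {}) \<union> (\<lambda>j. (0::nat,j)) ` S) \<inter> (\<lambda>j. (1,j)) ` T = {}" by auto
  have d2: "(if flag then {(0::nat,1::nat)} else {}) \<inter> (\<lambda>j. (0,j)) ` S = {}" using assms by auto
  have i1: "inj_on (\<lambda>j. (0::nat,j)) S" "inj_on (\<lambda>j. (1::nat,j)) T" by (auto simp: inj_on_def)
  have "(\<Prod>e\<in>Eset flag S T. g e) = (\<Prod>e\<in>(if flag then {(0,1)} else {}) \<union> (\<lambda>j. (0,j)) ` S. g e) * (\<Prod>e\<in>(\<lambda>j. (1,j)) ` T. g e)"
    unfolding Eset_def by (rule prod.union_disjoint) (use fS d1 in auto)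
  also have "(\<Prod>e\<in>(if flag then {(0,1)} else {}) \<union> (\<lambda>j. (0,j)) ` S. g e) = (\<Prod>e\<in>(if flag then {(0,1)} else {}). g e) * (\<Prod>e\<in>(\<lambda>j. (0,j)) ` S. g e)"
    by (rule prod.union_disjoint) (use fS d2 in auto)
  finally show ?thesis using prod.reindex[OF i1(1), of g] prod.reindex[OF i1(2), of g] by (simp add: o_def)
qed

lemma double_delta:
  fixes X :: real and a b Q :: nat
  assumes "a < Q" "b < Q"
  shows "(\<Sum>q<Q. \<Sum>l<Q. if a = q \<and> b = l then X else 0) = X"
proof -
  have "(\<Sum>q<Q. \<Sum>l<Q. if a = q \<and> b = l then X else 0) = (\<Sum>q<Q. if a = q then (\<Sum>l<Q. if b = l then X else 0) else 0)"
    by (rule sum.cong) auto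
  also have "\<dots> = (\<Sum>q<Q. if a = q then X else 0)"
    using assms(2) by (intro sum.cong) auto
  also have "\<dots> = X" using assms(1) by auto
  finally show ?thesis .
qed

lemma two_center:
  fixes n :: nat and S T :: "nat set" and w :: "nat \<Rightarrow> real" and p :: "nat \<Rightarrow> nat \<Rightarrow> real"
  assumes n: "2 \<le> n" and S: "S \<subseteq> {2..<n}" and T: "T \<subseteq> {2..<n}" and ST: "S \<inter> T = {}"
    and w1: "(\<Sum>l<Q. w l) = 1"
  shows "(\<Sum>z\<in>{..<n} \<rightarrow>\<^sub>E {..<Q}. (\<Prod>i<n. w (z i)) * ((if flag then p (z 0) (z 1) else 1) * (\<Prod>j\<in>S. p (z 0) (z j)) * (\<Prod>j\<in>T. p (z 1) (z j))))
    = (\<Sum>q<Q. \<Sum>l<Q. (if flag then p q l else 1) * (w q * w l * theta Q w p q ^ card S * theta Q w p l ^ card T))"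
proof -
  define F where "F z = (\<Prod>i<n. w (z i)) * ((if flag then p (z 0) (z 1) else 1) * (\<Prod>j\<in>S. p (z 0) (z j)) * (\<Prod>j\<in>T. p (z 1) (z j)))" for z :: "nat \<Rightarrow> nat"
  define f where "f q l i a = (if i = 0 then (if a = q then w a else 0) else if i = 1 then (if a = l then w a else 0)
      else w a * (if i \<in> S then p q a else 1) * (if i \<in> T then p l a else 1))" for q l i a
  define c where "c q l = (if flag then p q l else 1)" for q l
  have fin2: "finite {2..<n}" by simp
  have split_n: "{..<n} = insert 0 (insert 1 {2..<n})" using n by auto
  have SS: "{2..<n} \<inter> S = S" "{2..<n} \<inter> T = T" using S T by auto
  have step1: "F z = (\<Sum>q<Q. \<Sum>l<Q. if z 0 = q \<and> z 1 = l then F z else 0)" if "z \<in> {..<n} \<rightarrow>\<^sub>E {..<Q}" for z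
  proof -
    have "z 0 < Q" "z 1 < Q" using PiE_mem[OF that, of 0] PiE_mem[OF that, of 1] n by auto
    then show ?thesis by (rule double_delta[symmetric])
  qed
  have step2: "(if z 0 = q \<and> z 1 = l then F z else 0) = c q l * (\<Prod>i<n. f q l i (z i))" for z q l
  proof -
    have P: "(\<Prod>i<n. f q l i (z i)) = f q l 0 (z 0) * f q l 1 (z 1) * (\<Prod>i\<in>{2..<n}. f q l i (z i))"
      unfolding split_n by simp
    have P2: "(\<Prod>i\<in>{2..<n}. f q l i (z i)) = (\<Prod>i\<in>{2..<n}. w (z i)) * (\<Prod>j\<in>S. p q (z j)) * (\<Prod>j\<in>T. p l (z j))"
    proof -
      have "(\<Prod>i\<in>{2..<n}. f q l i (z i)) = (\<Prod>i\<in>{2..<n}. w (z i) * (if i \<in> S then p q (z i) else 1) * (if i \<in> T then p l (z i) else 1))"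
        by (rule prod.cong) (auto simp: f_def)
      also have "\<dots> = (\<Prod>i\<in>{2..<n}. w (z i)) * (\<Prod>i\<in>{2..<n}. if i \<in> S then p q (z i) else 1) * (\<Prod>i\<in>{2..<n}. if i \<in> T then p l (z i) else 1)"
        by (simp add: prod.distrib)
      also have "\<dots> = (\<Prod>i\<in>{2..<n}. w (z i)) * (\<Prod>j\<in>S. p q (z j)) * (\<Prod>j\<in>T. p l (z j))"
        using prod.inter_restrict[OF fin2, of "\<lambda>i. p q (z i)" S] prod.inter_restrict[OF fin2, of "\<lambda>i. p l (z i)" T] SS
        by simp
      finally show ?thesis .
    qed
    have W: "(\<Prod>i<n. w (z i)) = w (z 0) * w (z 1) * (\<Prod>i\<in>{2..<n}. w (z i))"
      unfolding split_n by simp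
    show ?thesis
    proof (cases "z 0 = q \<and> z 1 = l")
      case True
      then show ?thesis unfolding P P2 F_def W c_def by (simp add: f_def mult_ac)
    next
      case False
      then show ?thesis unfolding P by (auto simp: f_def)
    qed
  qed
  have step3: "(\<Sum>z\<in>{..<n} \<rightarrow>\<^sub>E {..<Q}. \<Prod>i<n. f q l i (z i)) = w q * w l * theta Q w p q ^ card S * theta Q w p l ^ card T"
    if ql: "q < Q" "l < Q" for q l
  proof -
    have hP: "(\<Prod>i\<in>{2..<n}. \<Sum>a<Q. f q l i a) = (\<Prod>i\<in>{2..<n}. (if i \<in> S then theta Q w p q else 1) * (if i \<in> T then theta Q w p l else 1))"
    proof (rule prod.cong[OF refl])
      fix i assume i: "i \<in> {2..<n}"
      have fi: "f q l i a = w a * (if i \<in> S then p q a else 1) * (if i \<in> T then p l a else 1)" for a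
        using i by (simp add: f_def)
      show "(\<Sum>a<Q. f q l i a) = (if i \<in> S then theta Q w p q else 1) * (if i \<in> T then theta Q w p l else 1)"
        unfolding fi using ST w1 by (cases "i \<in> S"; cases "i \<in> T") (auto simp: theta_def)
    qed
    have h0: "(\<Sum>a<Q. f q l 0 a) = w q" using ql by (simp add: f_def)
    have h1: "(\<Sum>a<Q. f q l 1 a) = w l" using ql by (simp add: f_def)
    have hQ: "(\<Prod>i\<in>{2..<n}. (if i \<in> S then theta Q w p q else 1) * (if i \<in> T then theta Q w p l else 1)) = theta Q w p q ^ card S * theta Q w p l ^ card T"
      using prod.inter_restrict[OF fin2, of "\<lambda>i. theta Q w p q" S] prod.inter_restrict[OF fin2, of "\<lambda>i. theta Q w p l" T] SS
      by (simp add: prod.distrib)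
    have "(\<Sum>z\<in>{..<n} \<rightarrow>\<^sub>E {..<Q}. \<Prod>i<n. f q l i (z i)) = (\<Prod>i<n. \<Sum>a<Q. f q l i a)"
      by (rule prod_sum_PiE[symmetric]) auto
    also have "\<dots> = (\<Sum>a<Q. f q l 0 a) * (\<Sum>a<Q. f q l 1 a) * (\<Prod>i\<in>{2..<n}. \<Sum>a<Q. f q l i a)"
      unfolding split_n by simp
    also have "\<dots> = w q * w l * (theta Q w p q ^ card S * theta Q w p l ^ card T)"
      by (simp only: h0 h1 hP hQ)
    finally show ?thesis by (simp add: mult_ac)
  qed
  have "(\<Sum>z\<in>{..<n} \<rightarrow>\<^sub>E {..<Q}. F z) = (\<Sum>z\<in>{..<n} \<rightarrow>\<^sub>E {..<Q}. \<Sum>q<Q. \<Sum>l<Q. if z 0 = q \<and> z 1 = l then F z else 0)"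
    by (rule sum.cong[OF refl]) (rule step1)
  also have "\<dots> = (\<Sum>q<Q. \<Sum>l<Q. \<Sum>z\<in>{..<n} \<rightarrow>\<^sub>E {..<Q}. if z 0 = q \<and> z 1 = l then F z else 0)"
    by (subst sum.swap) (subst sum.swap, rule refl)
  also have "\<dots> = (\<Sum>q<Q. \<Sum>l<Q. c q l * (w q * w l * theta Q w p q ^ card S * theta Q w p l ^ card T))"
  proof (intro sum.cong refl)
    fix q l assume ql: "q \<in> {..<Q}" "l \<in> {..<Q}"
    have "(\<Sum>z\<in>{..<n} \<rightarrow>\<^sub>E {..<Q}. if z 0 = q \<and> z 1 = l then F z else 0) = c q l * (\<Sum>z\<in>{..<n} \<rightarrow>\<^sub>E {..<Q}. \<Prod>i<n. f q l i (z i))"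
      by (simp only: step2 sum_distrib_left)
    then show "(\<Sum>z\<in>{..<n} \<rightarrow>\<^sub>E {..<Q}. if z 0 = q \<and> z 1 = l then F z else 0) = c q l * (w q * w l * theta Q w p q ^ card S * theta Q w p l ^ card T)"
      using step3[of q l] ql by simp
  qed
  finally show ?thesis unfolding F_def c_def by (simp add: mult_ac)
qed


lemma moment_from_law:
  fixes n Q :: nat and S T :: "nat set"
  assumes law: "law_K n Q w p = law_K n Q w' p'" and n: "2 \<le> n"
    and S: "S \<subseteq> {2..<n}" and T: "T \<subseteq> {2..<n}" and ST: "S \<inter> T = {}"
    and w1: "(\<Sum>l<Q. w l) = 1" and w1': "(\<Sum>l<Q. w' l) = 1"
  shows "(\<Sum>q<Q. \<Sum>l<Q. (if flag then p q l else 1) * (w q * w l * theta Q w p q ^ card S * theta Q w p l ^ card T))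
       = (\<Sum>q<Q. \<Sum>l<Q. (if flag then p' q l else 1) * (w' q * w' l * theta Q w' p' q ^ card S * theta Q w' p' l ^ card T))"
proof -
  have E: "Eset flag S T \<subseteq> pairs n" by (rule Eset_sub[OF S T n])
  have pe: "(\<Prod>e\<in>Eset flag S T. pp (z (fst e)) (z (snd e))) = (if flag then pp (z 0) (z 1) else 1) * (\<Prod>j\<in>S. pp (z 0) (z j)) * (\<Prod>j\<in>T. pp (z 1) (z j))"
    for pp :: "nat \<Rightarrow> nat \<Rightarrow> real" and z :: "nat \<Rightarrow> nat"
    using prod_Eset[OF S T, of "\<lambda>e. pp (z (fst e)) (z (snd e))" flag] by simp
  have "(\<Sum>z\<in>{..<n} \<rightarrow>\<^sub>E {..<Q}. (\<Prod>i<n. w (z i)) * ((if flag then p (z 0) (z 1) else 1) * (\<Prod>j\<in>S. p (z 0) (z j)) * (\<Prod>j\<in>T. p (z 1) (z j))))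
      = (\<Sum>z\<in>{..<n} \<rightarrow>\<^sub>E {..<Q}. (\<Prod>i<n. w' (z i)) * ((if flag then p' (z 0) (z 1) else 1) * (\<Prod>j\<in>S. p' (z 0) (z j)) * (\<Prod>j\<in>T. p' (z 1) (z j))))"
    using law_moment_eq[OF E law] unfolding pe .
  then show ?thesis unfolding two_center[OF n S T ST w1] two_center[OF n S T ST w1'] .
qed

lemma card_atLeastLessThan_shift: "card {a..<a + k} = (k::nat)" by simp

lemma sum_w_out: "(\<Sum>l\<in>A. (c::real) * (w l * X)) = c * X * sum w A"
  by (simp add: sum_distrib_left mult_ac)

lemma collapse:
  assumes "sum w A = (1::real)"
  shows "(\<Sum>q\<in>B. \<Sum>l\<in>A. w q * w l * X q) = (\<Sum>q\<in>B. w q * X q)"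
proof (rule sum.cong[OF refl])
  fix q
  have "(\<Sum>l\<in>A. w q * w l * X q) = w q * X q * sum w A" by (simp add: sum_distrib_left mult_ac)
  then show "(\<Sum>l\<in>A. w q * w l * X q) = w q * X q" using assms by simp
qed

lemma moment1:
  fixes n Q k :: nat
  assumes law: "law_K n Q w p = law_K n Q w' p'" and n: "2 * Q + 1 \<le> n" and k: "k < 2 * Q"
    and w1: "(\<Sum>l<Q. w l) = 1" and w1': "(\<Sum>l<Q. w' l) = 1"
  shows "(\<Sum>q<Q. w q * theta Q w p q ^ k) = (\<Sum>q<Q. w' q * theta Q w' p' q ^ k)"
proof -
  have "(\<Sum>q<Q. \<Sum>l<Q. (if False then p q l else 1) * (w q * w l * theta Q w p q ^ card {2..<2+k} * theta Q w p l ^ card ({}::nat set)))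
       = (\<Sum>q<Q. \<Sum>l<Q. (if False then p' q l else 1) * (w' q * w' l * theta Q w' p' q ^ card {2..<2+k} * theta Q w' p' l ^ card ({}::nat set)))"
    by (rule moment_from_law[OF law]) (use n k w1 w1' in auto)
  then show ?thesis using collapse[OF w1, where B="{..<Q}" and X="\<lambda>q. theta Q w p q ^ k"] collapse[OF w1', where B="{..<Q}" and X="\<lambda>q. theta Q w' p' q ^ k"]
    by simp
qed

lemma moment2:
  fixes n Q a b :: nat
  assumes law: "law_K n Q w p = law_K n Q w' p'" and n: "2 * Q + 1 \<le> n" and a: "a < Q" and b: "b < Q"
    and w1: "(\<Sum>l<Q. w l) = 1" and w1': "(\<Sum>l<Q. w' l) = 1"
  shows "(\<Sum>q<Q. \<Sum>l<Q. p q l * (w q * w l * theta Q w p q ^ a * theta Q w p l ^ b))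
       = (\<Sum>q<Q. \<Sum>l<Q. p' q l * (w' q * w' l * theta Q w' p' q ^ a * theta Q w' p' l ^ b))"
proof -
  have "(\<Sum>q<Q. \<Sum>l<Q. (if True then p q l else 1) * (w q * w l * theta Q w p q ^ card {2..<2+a} * theta Q w p l ^ card {2+a..<2+a+b}))
       = (\<Sum>q<Q. \<Sum>l<Q. (if True then p' q l else 1) * (w' q * w' l * theta Q w' p' q ^ card {2..<2+a} * theta Q w' p' l ^ card {2+a..<2+a+b}))"
    by (rule moment_from_law[OF law]) (use n a b w1 w1' in auto)
  then show ?thesis by simp
qed

lemma lin_sum:
  fixes f :: "'i \<Rightarrow> real"
  shows "(\<Sum>i\<in>A. f i * (\<Sum>k\<in>K. c k * g i k)) = (\<Sum>k\<in>K. c k * (\<Sum>i\<in>A. f i * g i k))"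
proof -
  have "(\<Sum>i\<in>A. f i * (\<Sum>k\<in>K. c k * g i k)) = (\<Sum>i\<in>A. \<Sum>k\<in>K. c k * (f i * g i k))"
    by (simp add: sum_distrib_left mult_ac)
  also have "\<dots> = (\<Sum>k\<in>K. \<Sum>i\<in>A. c k * (f i * g i k))" by (rule sum.swap)
  also have "\<dots> = (\<Sum>k\<in>K. c k * (\<Sum>i\<in>A. f i * g i k))" by (simp add: sum_distrib_left)
  finally show ?thesis .
qed

lemma poly_expand: fixes L :: "real poly" shows "degree L < N \<Longrightarrow> poly L x = (\<Sum>k<N. coeff L k * x ^ k)"
  unfolding poly_altdef
  by (rule sum.mono_neutral_left) (auto simp: coeff_eq_0)

lemma lagrange:
  fixes X :: "real set"
  assumes X: "finite X" and t: "t \<in> X"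
  shows "\<exists>L. degree L < card X \<and> (\<forall>x\<in>X. poly L x = (if x = t then 1 else 0))"
proof -
  define D where "D = (\<Prod>s\<in>X - {t}. t - s)"
  define L where "L = smult (inverse D) (\<Prod>s\<in>X - {t}. [:-s, 1:])"
  have "degree L \<le> degree (\<Prod>s\<in>X - {t}. [:-s, 1:])" unfolding L_def by (rule degree_smult_le)
  also have "\<dots> \<le> (\<Sum>s\<in>X - {t}. degree [:-s, 1::real:])"
    using degree_prod_sum_le[of "X - {t}" "\<lambda>s. [:-s, 1::real:]"] X by (simp add: o_def)
  also have "\<dots> = card (X - {t})" by simp
  also have "\<dots> < card X" by (rule card_Diff1_less[OF X t])
  finally have dL: "degree L < card X" .
  have D0: "D \<noteq> 0" unfolding D_def using X by (auto simp: prod_zero_iff)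
  have pL: "poly L x = inverse D * (\<Prod>s\<in>X - {t}. x - s)" for x
    unfolding L_def by (simp add: poly_prod)
  have "\<forall>x\<in>X. poly L x = (if x = t then 1 else 0)"
  proof
    fix x assume x: "x \<in> X"
    show "poly L x = (if x = t then 1 else 0)"
    proof (cases "x = t")
      case True then show ?thesis using D0 by (simp add: pL D_def[symmetric])
    next
      case False
      then have "(\<Prod>s\<in>X - {t}. x - s) = 0" using X x by (auto simp: prod_zero_iff)
      then show ?thesis using False by (simp add: pL)
    qed
  qed
  then show ?thesis using dL by blast
qed



lemma poly_moment1:
  fixes n Q :: nat and L :: "real poly"
  assumes law: "law_K n Q w p = law_K n Q w' p'" and n: "2 * Q + 1 \<le> n"
    and w1: "(\<Sum>l<Q. w l) = 1" and w1': "(\<Sum>l<Q. w' l) = 1" and dL: "degree L < 2 * Q"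
  shows "(\<Sum>q<Q. w q * poly L (theta Q w p q)) = (\<Sum>q<Q. w' q * poly L (theta Q w' p' q))"
proof -
  have a: "(\<Sum>q<Q. w q * poly L (theta Q w p q)) = (\<Sum>k<2*Q. coeff L k * (\<Sum>q<Q. w q * theta Q w p q ^ k))"
    unfolding poly_expand[OF dL] by (rule lin_sum)
  have b: "(\<Sum>q<Q. w' q * poly L (theta Q w' p' q)) = (\<Sum>k<2*Q. coeff L k * (\<Sum>q<Q. w' q * theta Q w' p' q ^ k))"
    unfolding poly_expand[OF dL] by (rule lin_sum)
  show ?thesis unfolding a b
    by (rule sum.cong[OF refl]) (simp add: moment1[OF law n _ w1 w1'])
qed

lemma expand2:
  fixes L1 L2 :: "real poly"
  assumes d1: "degree L1 < N" and d2: "degree L2 < N"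
  shows "(\<Sum>q\<in>A. \<Sum>l\<in>A. G q l * (poly L1 (x q) * poly L2 (x l)))
       = (\<Sum>a<N. \<Sum>b<N. coeff L1 a * coeff L2 b * (\<Sum>q\<in>A. \<Sum>l\<in>A. G q l * (x q ^ a * x l ^ b)))"
proof -
  have "(\<Sum>q\<in>A. \<Sum>l\<in>A. G q l * (poly L1 (x q) * poly L2 (x l)))
      = (\<Sum>q\<in>A. \<Sum>l\<in>A. \<Sum>a<N. \<Sum>b<N. coeff L1 a * coeff L2 b * (G q l * (x q ^ a * x l ^ b)))"
  proof (intro sum.cong refl)
    fix q l
    have "G q l * (poly L1 (x q) * poly L2 (x l)) = G q l * (\<Sum>a<N. \<Sum>b<N. (coeff L1 a * x q ^ a) * (coeff L2 b * x l ^ b))"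
      unfolding poly_expand[OF d1] poly_expand[OF d2] sum_product ..
    also have "\<dots> = (\<Sum>a<N. \<Sum>b<N. G q l * ((coeff L1 a * x q ^ a) * (coeff L2 b * x l ^ b)))"
      by (simp add: sum_distrib_left)
    also have "\<dots> = (\<Sum>a<N. \<Sum>b<N. coeff L1 a * coeff L2 b * (G q l * (x q ^ a * x l ^ b)))"
      by (intro sum.cong refl) (simp add: mult_ac)
    finally show "G q l * (poly L1 (x q) * poly L2 (x l)) = (\<Sum>a<N. \<Sum>b<N. coeff L1 a * coeff L2 b * (G q l * (x q ^ a * x l ^ b)))" .
  qed
  also have "\<dots> = (\<Sum>q\<in>A. \<Sum>a<N. \<Sum>l\<in>A. \<Sum>b<N. coeff L1 a * coeff L2 b * (G q l * (x q ^ a * x l ^ b)))"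
    by (rule sum.cong[OF refl], rule sum.swap)
  also have "\<dots> = (\<Sum>q\<in>A. \<Sum>a<N. \<Sum>b<N. \<Sum>l\<in>A. coeff L1 a * coeff L2 b * (G q l * (x q ^ a * x l ^ b)))"
    by (rule sum.cong[OF refl], rule sum.cong[OF refl], rule sum.swap)
  also have "\<dots> = (\<Sum>a<N. \<Sum>q\<in>A. \<Sum>b<N. \<Sum>l\<in>A. coeff L1 a * coeff L2 b * (G q l * (x q ^ a * x l ^ b)))"
    by (rule sum.swap)
  also have "\<dots> = (\<Sum>a<N. \<Sum>b<N. \<Sum>q\<in>A. \<Sum>l\<in>A. coeff L1 a * coeff L2 b * (G q l * (x q ^ a * x l ^ b)))"
    by (rule sum.cong[OF refl], rule sum.swap)
  also have "\<dots> = (\<Sum>a<N. \<Sum>b<N. coeff L1 a * coeff L2 b * (\<Sum>q\<in>A. \<Sum>l\<in>A. G q l * (x q ^ a * x l ^ b)))"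
    by (simp add: sum_distrib_left)
  finally show ?thesis .
qed

lemma poly_moment2:
  fixes n Q :: nat and L1 L2 :: "real poly"
  assumes law: "law_K n Q w p = law_K n Q w' p'" and n: "2 * Q + 1 \<le> n"
    and w1: "(\<Sum>l<Q. w l) = 1" and w1': "(\<Sum>l<Q. w' l) = 1" and d1: "degree L1 < Q" and d2: "degree L2 < Q"
  shows "(\<Sum>q<Q. \<Sum>l<Q. (p q l * (w q * w l)) * (poly L1 (theta Q w p q) * poly L2 (theta Q w p l)))
       = (\<Sum>q<Q. \<Sum>l<Q. (p' q l * (w' q * w' l)) * (poly L1 (theta Q w' p' q) * poly L2 (theta Q w' p' l)))"
proof -
  have m: "(\<Sum>q<Q. \<Sum>l<Q. (p q l * (w q * w l)) * (theta Q w p q ^ a * theta Q w p l ^ b))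
      = (\<Sum>q<Q. \<Sum>l<Q. (p' q l * (w' q * w' l)) * (theta Q w' p' q ^ a * theta Q w' p' l ^ b))"
    if "a < Q" "b < Q" for a b
    using moment2[OF law n that w1 w1'] by (simp add: mult.assoc)
  show ?thesis
    unfolding expand2[OF d1 d2]
    by (intro sum.cong refl) (simp add: m)
qed



lemma identify:
  fixes Q n :: nat
  assumes ps: "param_space Q w p" and ps': "param_space Q w' p'"
    and inj: "inj_on (theta Q w p) {..<Q}"
    and law: "law_K n Q w p = law_K n Q w' p'" and n: "2 * Q + 1 \<le> n"
  shows "\<exists>\<sigma>. \<sigma> permutes {..<Q} \<and> (\<forall>q<Q. w' q = w (\<sigma> q)) \<and> (\<forall>q<Q. \<forall>l<Q. p' q l = p (\<sigma> q) (\<sigma> l))"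
proof -
  have wpos: "\<And>q. q < Q \<Longrightarrow> 0 < w q" and w1: "(\<Sum>l<Q. w l) = 1"
    using ps unfolding param_space_def open_simplex_def by auto
  have wpos': "\<And>q. q < Q \<Longrightarrow> 0 < w' q" and w1': "(\<Sum>l<Q. w' l) = 1"
    using ps' unfolding param_space_def open_simplex_def by auto
  define th where "th = theta Q w p"
  define th' where "th' = theta Q w' p'"
  have injth: "th q = th q' \<longleftrightarrow> q = q'" if "q < Q" "q' < Q" for q q'
    using inj that unfolding th_def inj_on_def by auto
  define X where "X = th ` {..<Q} \<union> th' ` {..<Q}"
  have finX: "finite X" unfolding X_def by simp
  have cardX: "card X \<le> 2 * Q"
  proof -
    have "card X \<le> card (th ` {..<Q}) + card (th' ` {..<Q})" unfolding X_def by (rule card_Un_le)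
    also have "\<dots> \<le> Q + Q" by (intro add_mono) (rule card_image_le[of "{..<Q}", simplified])+
    finally show ?thesis by simp
  qed
  have U: "(\<Sum>q<Q. if th q = t then w q else 0) = (\<Sum>r<Q. if th' r = t then w' r else 0)" for t
  proof (cases "t \<in> X")
    case True
    obtain L where dL: "degree L < card X" and L: "\<forall>x\<in>X. poly L x = (if x = t then 1 else 0)"
      using lagrange[OF finX True] by blast
    have dL2: "degree L < 2 * Q" using dL cardX by simp
    have "(\<Sum>q<Q. w q * poly L (th q)) = (\<Sum>q<Q. w' q * poly L (th' q))"
      unfolding th_def th'_def by (rule poly_moment1[OF law n w1 w1' dL2])
    moreover have "(\<Sum>q<Q. w q * poly L (th q)) = (\<Sum>q<Q. if th q = t then w q else 0)"
    proof (rule sum.cong[OF refl])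
      fix q assume "q \<in> {..<Q}"
      then have "th q \<in> X" unfolding X_def by blast
      then show "w q * poly L (th q) = (if th q = t then w q else 0)" using L by simp
    qed
    moreover have "(\<Sum>q<Q. w' q * poly L (th' q)) = (\<Sum>q<Q. if th' q = t then w' q else 0)"
    proof (rule sum.cong[OF refl])
      fix q assume "q \<in> {..<Q}"
      then have "th' q \<in> X" unfolding X_def by blast
      then show "w' q * poly L (th' q) = (if th' q = t then w' q else 0)" using L by simp
    qed
    ultimately show ?thesis by simp
  next
    case False
    have a: "th q \<noteq> t" "th' q \<noteq> t" if "q < Q" for q
      using False that unfolding X_def by auto
    have "(\<Sum>q<Q. if th q = t then w q else 0) = 0" by (rule sum.neutral) (use a in auto)
    moreover have "(\<Sum>q<Q. if th' q = t then w' q else 0) = 0" by (rule sum.neutral) (use a in auto)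
    ultimately show ?thesis by simp
  qed
  have Lhs: "(\<Sum>q<Q. if th q = th q0 then w q else 0) = w q0" if "q0 < Q" for q0
  proof -
    have "(\<Sum>q<Q. if th q = th q0 then w q else 0) = (\<Sum>q<Q. if q0 = q then w q else 0)"
      by (rule sum.cong[OF refl]) (use injth that in auto)
    also have "\<dots> = w q0" using that by simp
    finally show ?thesis .
  qed
  have pos_sum: "0 < (\<Sum>q<Q. if th' q = th' r then w' q else 0)" if "r < Q" for r
  proof -
    have "(if th' r = th' r then w' r else 0) \<le> (\<Sum>q<Q. if th' q = th' r then w' q else 0)"
      by (rule member_le_sum) (use that wpos' in \<open>auto intro: less_imp_le\<close>)
    then show ?thesis using wpos'[OF that] by simp
  qed
  have exq: "\<exists>q<Q. th q = th' r" if "r < Q" for r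
  proof (rule ccontr)
    assume "\<not> (\<exists>q<Q. th q = th' r)"
    then have "(\<Sum>q<Q. if th q = th' r then w q else 0) = 0" by (intro sum.neutral) auto
    then show False using U[of "th' r"] pos_sum[OF that] by simp
  qed
  define \<sigma> where "\<sigma> r = (if r < Q then (SOME q. q < Q \<and> th q = th' r) else r)" for r
  have \<sigma>: "\<sigma> r < Q \<and> th (\<sigma> r) = th' r" if "r < Q" for r
    using someI_ex[OF exq[OF that]] that unfolding \<sigma>_def by simp
  have surj: "\<sigma> ` {..<Q} = {..<Q}"
  proof
    show "\<sigma> ` {..<Q} \<subseteq> {..<Q}" using \<sigma> by auto
    show "{..<Q} \<subseteq> \<sigma> ` {..<Q}"
    proof
      fix q assume q: "q \<in> {..<Q}"
      have "\<exists>r<Q. th' r = th q"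
      proof (rule ccontr)
        assume "\<not> (\<exists>r<Q. th' r = th q)"
        then have "(\<Sum>r<Q. if th' r = th q then w' r else 0) = 0" by (intro sum.neutral) auto
        then show False using U[of "th q"] Lhs[of q] wpos[of q] q by simp
      qed
      then obtain r where r: "r < Q" "th' r = th q" by blast
      then have "\<sigma> r = q" using \<sigma>[OF r(1)] injth q by auto
      then show "q \<in> \<sigma> ` {..<Q}" using r by auto
    qed
  qed
  have inj\<sigma>: "inj_on \<sigma> {..<Q}" by (rule eq_card_imp_inj_on) (simp_all add: surj)
  have perm: "\<sigma> permutes {..<Q}"
  proof (rule bij_imp_permutes)
    show "bij_betw \<sigma> {..<Q} {..<Q}" unfolding bij_betw_def using inj\<sigma> surj by blast
    show "\<sigma> x = x" if "x \<notin> {..<Q}" for x using that unfolding \<sigma>_def by simp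
  qed
  have th'\<sigma>: "th' r = th (\<sigma> r)" if "r < Q" for r using \<sigma>[OF that] by simp
  have wts: "w' r = w (\<sigma> r)" if r: "r < Q" for r
  proof -
    have "(\<Sum>q<Q. if th' q = th' r then w' q else 0) = (\<Sum>q<Q. if r = q then w' q else 0)"
    proof (rule sum.cong[OF refl])
      fix q assume "q \<in> {..<Q}"
      then have q: "q < Q" by simp
      have "th' q = th' r \<longleftrightarrow> th (\<sigma> q) = th (\<sigma> r)" by (simp only: th'\<sigma>[OF q] th'\<sigma>[OF r])
      also have "\<dots> \<longleftrightarrow> \<sigma> q = \<sigma> r" using injth \<sigma>[OF q] \<sigma>[OF r] by blast
      also have "\<dots> \<longleftrightarrow> q = r" using inj\<sigma> q r unfolding inj_on_def by auto
      finally show "(if th' q = th' r then w' q else 0) = (if r = q then w' q else 0)" by auto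
    qed
    also have "\<dots> = w' r" using r by simp
    finally have "(\<Sum>q<Q. if th' q = th' r then w' q else 0) = w' r" .
    moreover have "(\<Sum>q<Q. if th q = th' r then w q else 0) = w (\<sigma> r)"
      using Lhs[of "\<sigma> r"] \<sigma>[OF r] by simp
    ultimately show ?thesis using U[of "th' r"] by simp
  qed
  have cardY: "card (th ` {..<Q}) = Q"
    using card_image[OF inj] unfolding th_def by simp
  have conn: "p' r s = p (\<sigma> r) (\<sigma> s)" if r: "r < Q" and s: "s < Q" for r s
  proof -
    define q0 where "q0 = \<sigma> r"
    define l0 where "l0 = \<sigma> s"
    have q0: "q0 < Q" and l0: "l0 < Q" using \<sigma> r s unfolding q0_def l0_def by auto
    obtain L1 where d1: "degree L1 < card (th ` {..<Q})"
      and L1: "\<forall>x\<in>th ` {..<Q}. poly L1 x = (if x = th q0 then 1 else 0)"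
      using lagrange[of "th ` {..<Q}" "th q0"] q0 by auto
    obtain L2 where d2: "degree L2 < card (th ` {..<Q})"
      and L2: "\<forall>x\<in>th ` {..<Q}. poly L2 x = (if x = th l0 then 1 else 0)"
      using lagrange[of "th ` {..<Q}" "th l0"] l0 by auto
    have pL1: "poly L1 (th q) = (if q0 = q then 1 else 0)" if "q < Q" for q
      using L1 that injth[OF that q0] by auto
    have pL2: "poly L2 (th q) = (if l0 = q then 1 else 0)" if "q < Q" for q
      using L2 that injth[OF that l0] by auto
    have pL1': "poly L1 (th' q) = (if r = q then 1 else 0)" if "q < Q" for q
    proof -
      have "poly L1 (th' q) = (if \<sigma> r = \<sigma> q then 1 else 0)" using pL1[of "\<sigma> q"] \<sigma>[OF that] q0_def by auto
      also have "\<dots> = (if r = q then 1 else 0)" using inj\<sigma> that r unfolding inj_on_def by auto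
      finally show ?thesis .
    qed
    have pL2': "poly L2 (th' q) = (if s = q then 1 else 0)" if "q < Q" for q
    proof -
      have "poly L2 (th' q) = (if \<sigma> s = \<sigma> q then 1 else 0)" using pL2[of "\<sigma> q"] \<sigma>[OF that] l0_def by auto
      also have "\<dots> = (if s = q then 1 else 0)" using inj\<sigma> that s unfolding inj_on_def by auto
      finally show ?thesis .
    qed
    have M: "(\<Sum>q<Q. \<Sum>l<Q. (p q l * (w q * w l)) * (poly L1 (th q) * poly L2 (th l)))
       = (\<Sum>q<Q. \<Sum>l<Q. (p' q l * (w' q * w' l)) * (poly L1 (th' q) * poly L2 (th' l)))"
      unfolding th_def th'_def using d1 d2 cardY
      by (intro poly_moment2[OF law n w1 w1']) (simp_all add: th_def)
    have "(\<Sum>q<Q. \<Sum>l<Q. (p q l * (w q * w l)) * (poly L1 (th q) * poly L2 (th l)))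
        = (\<Sum>q<Q. \<Sum>l<Q. if q0 = q \<and> l0 = l then p q0 l0 * (w q0 * w l0) else 0)"
      by (intro sum.cong refl) (simp add: pL1 pL2)
    also have "\<dots> = p q0 l0 * (w q0 * w l0)" by (rule double_delta[OF q0 l0])
    finally have A: "(\<Sum>q<Q. \<Sum>l<Q. (p q l * (w q * w l)) * (poly L1 (th q) * poly L2 (th l))) = p q0 l0 * (w q0 * w l0)" .
    have "(\<Sum>q<Q. \<Sum>l<Q. (p' q l * (w' q * w' l)) * (poly L1 (th' q) * poly L2 (th' l)))
        = (\<Sum>q<Q. \<Sum>l<Q. if r = q \<and> s = l then p' r s * (w' r * w' s) else 0)"
      by (intro sum.cong refl) (simp add: pL1' pL2')
    also have "\<dots> = p' r s * (w' r * w' s)" by (rule double_delta[OF r s])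
    finally have B: "(\<Sum>q<Q. \<Sum>l<Q. (p' q l * (w' q * w' l)) * (poly L1 (th' q) * poly L2 (th' l))) = p' r s * (w' r * w' s)" .
    have "p q0 l0 * (w q0 * w l0) = p' r s * (w q0 * w l0)"
    proof -
      have "p q0 l0 * (w q0 * w l0) = p' r s * (w' r * w' s)" using A B M by simp
      then show ?thesis unfolding wts[OF r] wts[OF s] q0_def l0_def .
    qed
    moreover have "w q0 * w l0 \<noteq> 0" using wpos[OF q0] wpos[OF l0] by simp
    ultimately show ?thesis unfolding q0_def l0_def by simp
  qed
  show ?thesis using perm wts conn by blast
qed



definition Fpoly :: "nat \<Rightarrow> (nat \<Rightarrow> real) \<Rightarrow> (nat \<Rightarrow> nat \<Rightarrow> real) \<Rightarrow> real" where
  "Fpoly Q w p = (\<Prod>q<Q. \<Prod>r<Q. if q < r then theta Q w p q - theta Q w p r else 1)"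

lemma param_poly_theta: "q < Q \<Longrightarrow> param_poly Q (\<lambda>w p. theta Q w p q)"
  unfolding theta_def
  by (intro param_poly_sum param_poly_mult param_poly_w param_poly_p) auto

lemma param_poly_Fpoly: "param_poly Q (Fpoly Q)"
proof -
  have "param_poly Q (\<lambda>w p. \<Prod>q<Q. \<Prod>r<Q. if q < r then theta Q w p q - theta Q w p r else 1)"
  proof (intro param_poly_prod)
    fix q r assume q: "q \<in> {..<Q}" and r: "r \<in> {..<Q}"
    show "param_poly Q (\<lambda>w p. if q < r then theta Q w p q - theta Q w p r else 1)"
    proof (cases "q < r")
      case True
      then show ?thesis using q r by (simp add: param_poly_diff param_poly_theta)
    next
      case False
      then show ?thesis by (simp add: param_poly_const)
    qed
  qed auto
  moreover have "Fpoly Q = (\<lambda>w p. \<Prod>q<Q. \<Prod>r<Q. if q < r then theta Q w p q - theta Q w p r else 1)"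
    unfolding Fpoly_def by (intro ext) simp
  ultimately show ?thesis by simp
qed

lemma Fpoly_inj: assumes "Fpoly Q w p \<noteq> 0" shows "inj_on (theta Q w p) {..<Q}"
proof (rule inj_onI, rule ccontr)
  fix q r assume q: "q \<in> {..<Q}" and r: "r \<in> {..<Q}" and e: "theta Q w p q = theta Q w p r" and ne: "q \<noteq> r"
  define a where "a = min q r"
  define b where "b = max q r"
  have ab: "a < b" "a < Q" "b < Q" "theta Q w p a = theta Q w p b"
    using q r e ne unfolding a_def b_def by (auto simp: min_def max_def)
  have "(\<Prod>r<Q. if a < r then theta Q w p a - theta Q w p r else 1) = 0"
    using ab by (intro prod_zero) auto
  then have "Fpoly Q w p = 0" unfolding Fpoly_def using ab by (intro prod_zero) auto
  then show False using assms by simp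
qed

definition pex :: "nat \<Rightarrow> nat \<Rightarrow> nat \<Rightarrow> real" where
  "pex Q q l = (real q + real l + 1) / (2 * real Q + 1)"

lemma theta_pex:
  assumes "(\<Sum>l<Q. w l) = 1"
  shows "theta Q w (pex Q) q = (real q + (\<Sum>l<Q. w l * (real l + 1))) / (2 * real Q + 1)"
proof -
  have "theta Q w (pex Q) q = (\<Sum>l<Q. w l * real q + w l * (real l + 1)) / (2 * real Q + 1)"
    unfolding theta_def pex_def sum_divide_distrib by (intro sum.cong refl) (simp add: algebra_simps)
  also have "(\<Sum>l<Q. w l * real q + w l * (real l + 1)) = real q * (\<Sum>l<Q. w l) + (\<Sum>l<Q. w l * (real l + 1))"
    by (simp add: sum.distrib sum_distrib_left mult_ac)
  finally show ?thesis using assms by simp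
qed

lemma Fpoly_pex: assumes w1: "(\<Sum>l<Q. w l) = 1" shows "Fpoly Q w (pex Q) \<noteq> 0"
proof -
  have fac: "(if q < r then theta Q w (pex Q) q - theta Q w (pex Q) r else 1) \<noteq> 0" for q r
  proof (cases "q < r")
    case True
    have "theta Q w (pex Q) q \<noteq> theta Q w (pex Q) r"
    proof
      assume "theta Q w (pex Q) q = theta Q w (pex Q) r"
      then have "(real q + (\<Sum>l<Q. w l * (real l + 1))) / (2 * real Q + 1) = (real r + (\<Sum>l<Q. w l * (real l + 1))) / (2 * real Q + 1)"
        unfolding theta_pex[OF w1] .
      then have "real q = real r" by (simp add: divide_cancel_right)
      then show False using True by simp
    qed
    then show ?thesis using True by simp
  qed simp
  have "(\<Prod>r<Q. if q < r then theta Q w (pex Q) q - theta Q w (pex Q) r else 1) \<noteq> 0" for q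
    using fac by (simp only: prod_zero_iff[OF finite_lessThan]) blast
  then show ?thesis unfolding Fpoly_def by (simp only: prod_zero_iff[OF finite_lessThan]) blast
qed

lemma conn_pex: "conn_space Q (pex Q)"
  unfolding conn_space_def pex_def by (auto simp: field_simps)

theorem theorem2:
  fixes Q m :: nat
  assumes "Q \<ge> 3"
    and "even Q \<Longrightarrow> real m \<ge> real Q - 1 + (real Q + 2)^2 / 4"
    and "odd Q \<Longrightarrow> real m \<ge> real Q - 1 + (real Q + 1) * (real Q + 3) / 4"
  shows
    "(\<exists>F. param_poly Q F \<and> (\<exists>w p. param_space Q w p \<and> F w p \<noteq> 0) \<and>
        (\<forall>w p w' p'. param_space Q w p \<and> F w p \<noteq> 0 \<and> param_space Q w' p' \<and>
            law_K (m^2) Q w p = law_K (m^2) Q w' p' \<longrightarrow>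
            (\<exists>\<sigma>. \<sigma> permutes {..<Q} \<and> (\<forall>q<Q. w' q = w (\<sigma> q)) \<and>
                 (\<forall>q<Q. \<forall>l<Q. p' q l = p (\<sigma> q) (\<sigma> l)))))
     \<and>
     (\<forall>w. open_simplex Q w \<longrightarrow>
       (\<exists>G. conn_poly Q G \<and> (\<exists>p. conn_space Q p \<and> G p \<noteq> 0) \<and>
         (\<forall>p p'. conn_space Q p \<and> G p \<noteq> 0 \<and> conn_space Q p' \<and>
             law_K (m^2) Q w p = law_K (m^2) Q w p' \<longrightarrow>
             (\<exists>\<sigma>. \<sigma> permutes {..<Q} \<and> (\<forall>q<Q. w q = w (\<sigma> q)) \<and>
                  (\<forall>q<Q. \<forall>l<Q. p' q l = p (\<sigma> q) (\<sigma> l))))))"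
proof -
  have Q3: "Q \<ge> 3" by (rule assms(1))
  have mQ: "real m \<ge> real Q + 1"
  proof (cases "even Q")
    case True
    have "(5::real)^2 \<le> (real Q + 2)^2" using Q3 by (intro power_mono) auto
    then show ?thesis using assms(2)[OF True] by simp
  next
    case False
    have "(2::real) * 4 \<le> (real Q + 1) * (real Q + 3)" using Q3 by (intro mult_mono) auto
    then show ?thesis using assms(3)[OF False] by simp
  qed
  have mQ': "Q + 1 \<le> m" using mQ by linarith
  have n: "2 * Q + 1 \<le> m^2"
  proof -
    have "(Q + 1)^2 \<le> m^2" using mQ' by (rule power_mono) simp
    moreover have "2 * Q + 1 \<le> (Q + 1)^2" by (simp add: power2_eq_square)
    ultimately show ?thesis by linarith
  qed
  define wu where "wu = (\<lambda>q::nat. 1 / real Q)"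
  have wu: "open_simplex Q wu" unfolding open_simplex_def wu_def using Q3 by auto
  have wu1: "(\<Sum>l<Q. wu l) = 1" using wu unfolding open_simplex_def by simp
  have part1: "\<exists>F. param_poly Q F \<and> (\<exists>w p. param_space Q w p \<and> F w p \<noteq> 0) \<and>
        (\<forall>w p w' p'. param_space Q w p \<and> F w p \<noteq> 0 \<and> param_space Q w' p' \<and>
            law_K (m^2) Q w p = law_K (m^2) Q w' p' \<longrightarrow>
            (\<exists>\<sigma>. \<sigma> permutes {..<Q} \<and> (\<forall>q<Q. w' q = w (\<sigma> q)) \<and>
                 (\<forall>q<Q. \<forall>l<Q. p' q l = p (\<sigma> q) (\<sigma> l))))"
  proof (intro exI[of _ "Fpoly Q"] conjI allI impI)
    show "param_poly Q (Fpoly Q)" by (rule param_poly_Fpoly)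
    show "\<exists>w p. param_space Q w p \<and> Fpoly Q w p \<noteq> 0"
      using wu conn_pex Fpoly_pex[OF wu1] unfolding param_space_def by blast
    fix w p w' p'
    assume h: "param_space Q w p \<and> Fpoly Q w p \<noteq> 0 \<and> param_space Q w' p' \<and> law_K (m^2) Q w p = law_K (m^2) Q w' p'"
    show "\<exists>\<sigma>. \<sigma> permutes {..<Q} \<and> (\<forall>q<Q. w' q = w (\<sigma> q)) \<and> (\<forall>q<Q. \<forall>l<Q. p' q l = p (\<sigma> q) (\<sigma> l))"
      using identify[of Q w p w' p' "m^2"] h Fpoly_inj n by blast
  qed
  have part2: "\<forall>w. open_simplex Q w \<longrightarrow>
       (\<exists>G. conn_poly Q G \<and> (\<exists>p. conn_space Q p \<and> G p \<noteq> 0) \<and>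
         (\<forall>p p'. conn_space Q p \<and> G p \<noteq> 0 \<and> conn_space Q p' \<and>
             law_K (m^2) Q w p = law_K (m^2) Q w p' \<longrightarrow>
             (\<exists>\<sigma>. \<sigma> permutes {..<Q} \<and> (\<forall>q<Q. w q = w (\<sigma> q)) \<and>
                  (\<forall>q<Q. \<forall>l<Q. p' q l = p (\<sigma> q) (\<sigma> l)))))"
  proof (intro allI impI)
    fix w assume w: "open_simplex Q w"
    have w1: "(\<Sum>l<Q. w l) = 1" using w unfolding open_simplex_def by simp
    show "\<exists>G. conn_poly Q G \<and> (\<exists>p. conn_space Q p \<and> G p \<noteq> 0) \<and>
         (\<forall>p p'. conn_space Q p \<and> G p \<noteq> 0 \<and> conn_space Q p' \<and>
             law_K (m^2) Q w p = law_K (m^2) Q w p' \<longrightarrow>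
             (\<exists>\<sigma>. \<sigma> permutes {..<Q} \<and> (\<forall>q<Q. w q = w (\<sigma> q)) \<and>
                  (\<forall>q<Q. \<forall>l<Q. p' q l = p (\<sigma> q) (\<sigma> l))))"
    proof (intro exI[of _ "Fpoly Q w"] conjI allI impI)
      show "conn_poly Q (Fpoly Q w)" by (rule param_poly_conn[OF param_poly_Fpoly])
      show "\<exists>p. conn_space Q p \<and> Fpoly Q w p \<noteq> 0" using conn_pex Fpoly_pex[OF w1] by blast
      fix p p'
      assume h: "conn_space Q p \<and> Fpoly Q w p \<noteq> 0 \<and> conn_space Q p' \<and> law_K (m^2) Q w p = law_K (m^2) Q w p'"
      have ps: "param_space Q w p" "param_space Q w p'" using h w unfolding param_space_def by auto
      show "\<exists>\<sigma>. \<sigma> permutes {..<Q} \<and> (\<forall>q<Q. w q = w (\<sigma> q)) \<and> (\<forall>q<Q. \<forall>l<Q. p' q l = p (\<sigma> q) (\<sigma> l))"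
        using identify[OF ps(1) ps(2) Fpoly_inj _ n] h by blast
    qed
  qed
  show ?thesis using part1 part2 by blast
qed


end
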